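(* Let $n\ge 1$, $i\in\{1,\ldots,n-1\}$, and let $C$ be a set of transpositions in $S_n$ with $s_i\in C$. Put $D=C\cap s_iCs_i$. Then $\partial_i$ is defined on $H_C$, and $\partial_i(H_C)\subseteq H_D$.
   Context: Let $S_n$ be the symmetric group on $\{1,\ldots,n\}$ with $(vw)(j)=v(w(j))$, and $s_i=(i\leftrightarrow i+1)$. Let $H=\mathrm{Fun}(S_n,\mathbb{C}[t_1,\ldots,t_n])$ with pointwise operations. The star action of $w\in S_n$ on $f\in H$ is $(f*w)(v)=f(vw^{-1})$. Let $x_i\in H$ be the function $v\mapsto t_{v(i)}$. For a transposition $\tau=(i\leftrightarrow k)$, $f\in H$ satisfies condition $\tau$ if $f-f*\tau=(x_i-x_k)g$ for some $g\in H$; these form a subring $H_\tau$, and for a set $C$ of transpositions $H_C=\bigcap_{\tau\in C}H_\tau$ (with $H_\varnothing=H$). For $f\in H_{s_i}$, $\partial_i(f)$ is the unique $g\in H$ with $f-f*s_i=(x_i-x_{i+1})g$; $\partial_i$ is defined exactly on $H_{s_i}$. *)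

theory Defs
  imports Complex_Main "HOL-Library.Poly_Mapping" "HOL-Combinatorics.Permutations"
begin

text \<open>Polynomials over the complex numbers in variables t_j (j a natural number),
  in the standard Poly_Mapping representation: monomials are finitely supported
  exponent vectors.\<close>
type_synonym cpoly = "(nat \<Rightarrow>\<^sub>0 nat) \<Rightarrow>\<^sub>0 complex"

definition tvar :: "nat \<Rightarrow> cpoly" where
  "tvar j = Poly_Mapping.single (Poly_Mapping.single j 1) 1"

definition Pol :: "nat \<Rightarrow> cpoly set" where
  "Pol n = {p :: cpoly. \<forall>m \<in> Poly_Mapping.keys p. Poly_Mapping.keys m \<subseteq> {1..n}}"

text \<open>The symmetric group S_n on {1..n}; product is composition, (vw)(j) = v(w(j)).\<close>
definition Sym :: "nat \<Rightarrow> (nat \<Rightarrow> nat) set" where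
  "Sym n = {v. v permutes {1..n}}"

text \<open>H = Fun(S_n, C[t_1..t_n]); functions are represented canonically (value 0 off S_n).\<close>
definition HH :: "nat \<Rightarrow> ((nat \<Rightarrow> nat) \<Rightarrow> cpoly) set" where
  "HH n = {f. (\<forall>v \<in> Sym n. f v \<in> Pol n) \<and> (\<forall>v. v \<notin> Sym n \<longrightarrow> f v = 0)}"

definition star :: "((nat \<Rightarrow> nat) \<Rightarrow> cpoly) \<Rightarrow> (nat \<Rightarrow> nat) \<Rightarrow> ((nat \<Rightarrow> nat) \<Rightarrow> cpoly)" where
  "star f w = (\<lambda>v. f (v \<circ> inv w))"

definition xx :: "nat \<Rightarrow> nat \<Rightarrow> ((nat \<Rightarrow> nat) \<Rightarrow> cpoly)" where
  "xx n i = (\<lambda>v. if v \<in> Sym n then tvar (v i) else 0)"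

definition stranspo :: "nat \<Rightarrow> nat \<Rightarrow> nat" where
  "stranspo i = transpose i (Suc i)"

definition Transpositions :: "nat \<Rightarrow> (nat \<Rightarrow> nat) set" where
  "Transpositions n = {transpose a b | a b. a \<in> {1..n} \<and> b \<in> {1..n} \<and> a \<noteq> b}"

definition sat_cond :: "nat \<Rightarrow> (nat \<Rightarrow> nat) \<Rightarrow> ((nat \<Rightarrow> nat) \<Rightarrow> cpoly) \<Rightarrow> bool" where
  "sat_cond n \<tau> f \<longleftrightarrow> (\<exists>i k. i \<noteq> k \<and> \<tau> = transpose i k \<and>
      (\<exists>g \<in> HH n. \<forall>v. f v - star f \<tau> v = (xx n i v - xx n k v) * g v))"

definition HC :: "nat \<Rightarrow> (nat \<Rightarrow> nat) set \<Rightarrow> ((nat \<Rightarrow> nat) \<Rightarrow> cpoly) set" where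
  "HC n C = {f \<in> HH n. \<forall>\<tau> \<in> C. sat_cond n \<tau> f}"

definition ddiff :: "nat \<Rightarrow> nat \<Rightarrow> ((nat \<Rightarrow> nat) \<Rightarrow> cpoly) \<Rightarrow> ((nat \<Rightarrow> nat) \<Rightarrow> cpoly)" where
  "ddiff n i f = (THE g. g \<in> HH n \<and>
      (\<forall>v. f v - star f (stranspo i) v = (xx n i v - xx n (Suc i) v) * g v))"

end

theory Submission
  imports Defs
begin


definition mu :: "nat \<Rightarrow> nat \<Rightarrow> (nat \<Rightarrow>\<^sub>0 nat) \<Rightarrow> (nat \<Rightarrow>\<^sub>0 nat)" where
  "mu p q m = Poly_Mapping.update p 0 m + Poly_Mapping.single q (Poly_Mapping.lookup m p)"

lemma lookup_mu: "p \<noteq> q \<Longrightarrow> Poly_Mapping.lookup (mu p q m) x =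
   (if x = p then 0 else if x = q then Poly_Mapping.lookup m q + Poly_Mapping.lookup m p else Poly_Mapping.lookup m x)"
  by (auto simp: mu_def lookup_add lookup_update lookup_single)

lemma mu_add: "p \<noteq> q \<Longrightarrow> mu p q (m1 + m2) = mu p q m1 + mu p q m2"
  by (rule poly_mapping_eqI) (simp add: lookup_mu lookup_add)

definition subst :: "nat \<Rightarrow> nat \<Rightarrow> cpoly \<Rightarrow> cpoly" where
  "subst p q A = (\<Sum>m\<in>Poly_Mapping.keys A. Poly_Mapping.single (mu p q m) (Poly_Mapping.lookup A m))"

lemma subst_superset:
  assumes "finite S" "Poly_Mapping.keys A \<subseteq> S"
  shows "subst p q A = (\<Sum>m\<in>S. Poly_Mapping.single (mu p q m) (Poly_Mapping.lookup A m))"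
  unfolding subst_def
  by (rule sum.mono_neutral_left) (use assms in \<open>auto simp: in_keys_iff\<close>)

lemma subst_add: "subst p q (A + B) = subst p q A + subst p q B"
proof -
  let ?S = "Poly_Mapping.keys A \<union> Poly_Mapping.keys B"
  have "subst p q (A + B) = (\<Sum>m\<in>?S. Poly_Mapping.single (mu p q m) (Poly_Mapping.lookup (A+B) m))"
    by (rule subst_superset) (use keys_add[of A B] in auto)
  also have "\<dots> = (\<Sum>m\<in>?S. Poly_Mapping.single (mu p q m) (Poly_Mapping.lookup A m))
      + (\<Sum>m\<in>?S. Poly_Mapping.single (mu p q m) (Poly_Mapping.lookup B m))"
    by (simp add: lookup_add single_add sum.distrib)
  also have "\<dots> = subst p q A + subst p q B"
    by (subst (1 2) subst_superset[symmetric]) auto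
  finally show ?thesis .
qed

lemma subst_zero[simp]: "subst p q 0 = 0"
  by (simp add: subst_def)

lemma subst_diff: "subst p q (A - B) = subst p q A - subst p q B"
  using subst_add[of p q "A - B" B] by (simp add: eq_diff_eq)

lemma subst_sum: "subst p q (sum F S) = (\<Sum>x\<in>S. subst p q (F x))"
  by (induction S rule: infinite_finite_induct) (auto simp: subst_add)

lemma subst_single: "subst p q (Poly_Mapping.single m c) = Poly_Mapping.single (mu p q m) c"
  by (simp add: subst_def)

lemma poly_expand: "(A::cpoly) = (\<Sum>m\<in>Poly_Mapping.keys A. Poly_Mapping.single m (Poly_Mapping.lookup A m))"
proof (rule poly_mapping_eqI)
  fix k
  show "Poly_Mapping.lookup A k = Poly_Mapping.lookup (\<Sum>m\<in>Poly_Mapping.keys A. Poly_Mapping.single m (Poly_Mapping.lookup A m)) k"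
    by (auto simp: lookup_sum lookup_single when_def in_keys_iff)
qed

lemma subst_mult:
  assumes "p \<noteq> q"
  shows "subst p q (A * B) = subst p q A * subst p q B"
proof -
  let ?K = "Poly_Mapping.keys A" and ?L = "Poly_Mapping.keys B"
  have "A * B = (\<Sum>m\<in>?K. Poly_Mapping.single m (Poly_Mapping.lookup A m)) * (\<Sum>m\<in>?L. Poly_Mapping.single m (Poly_Mapping.lookup B m))"
    by (subst (1) poly_expand, subst (2) poly_expand) (rule refl)
  also have "\<dots> = (\<Sum>m1\<in>?K. \<Sum>m2\<in>?L. Poly_Mapping.single (m1 + m2) (Poly_Mapping.lookup A m1 * Poly_Mapping.lookup B m2))"
    by (simp add: sum_product mult_single)
  finally have "subst p q (A * B) = (\<Sum>m1\<in>?K. \<Sum>m2\<in>?L. Poly_Mapping.single (mu p q m1 + mu p q m2) (Poly_Mapping.lookup A m1 * Poly_Mapping.lookup B m2))"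
    by (simp add: subst_sum subst_single mu_add assms)
  also have "\<dots> = subst p q A * subst p q B"
    by (simp add: subst_def sum_product mult_single)
  finally show ?thesis .
qed

lemma tvar_eq_iff: "tvar a = tvar b \<longleftrightarrow> a = b"
proof
  assume "tvar a = tvar b"
  then have "Poly_Mapping.lookup (tvar a) (Poly_Mapping.single a 1) = Poly_Mapping.lookup (tvar b) (Poly_Mapping.single a 1)" by simp
  then have "Poly_Mapping.single b (1::nat) = Poly_Mapping.single a 1"
    by (simp add: tvar_def lookup_single when_def split: if_splits)
  then have "Poly_Mapping.lookup (Poly_Mapping.single b (1::nat)) a = Poly_Mapping.lookup (Poly_Mapping.single a 1) a" by simp
  then show "a = b" by (simp add: lookup_single when_def split: if_splits)
qed simp

lemma tvar_diff_nz: "a \<noteq> b \<Longrightarrow> tvar a - tvar b \<noteq> 0"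
  by (simp add: tvar_eq_iff)

lemma subst_tvar: "p \<noteq> q \<Longrightarrow> subst p q (tvar j) = tvar (if j = p then q else j)"
  unfolding tvar_def subst_single
  by (rule arg_cong[where f="\<lambda>m. Poly_Mapping.single m 1"], rule poly_mapping_eqI)
     (auto simp: lookup_mu lookup_single when_def)

lemma tvar_pow: "tvar p ^ k = Poly_Mapping.single (Poly_Mapping.single p k) 1"
  by (induction k) (auto simp: tvar_def mult_single single_add[symmetric] add.commute)

definition Dmon :: "nat \<Rightarrow> nat \<Rightarrow> (nat \<Rightarrow>\<^sub>0 nat) \<Rightarrow> complex \<Rightarrow> cpoly" where
  "Dmon p q m c = Poly_Mapping.single (Poly_Mapping.update p 0 m) c *
     (\<Sum>i<Poly_Mapping.lookup m p. tvar q ^ (Poly_Mapping.lookup m p - Suc i) * tvar p ^ i)"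

lemma Dmon_eq: "p \<noteq> q \<Longrightarrow> Poly_Mapping.single m c - Poly_Mapping.single (mu p q m) c = (tvar p - tvar q) * Dmon p q m c"
proof -
  assume pq: "p \<noteq> q"
  let ?k = "Poly_Mapping.lookup m p" and ?m0 = "Poly_Mapping.update p 0 m"
  have m: "m = ?m0 + Poly_Mapping.single p ?k"
    by (rule poly_mapping_eqI) (auto simp: lookup_add lookup_update lookup_single when_def)
  have "Poly_Mapping.single m c = Poly_Mapping.single ?m0 c * tvar p ^ ?k"
    by (subst m) (simp add: tvar_pow mult_single)
  moreover have "Poly_Mapping.single (mu p q m) c = Poly_Mapping.single ?m0 c * tvar q ^ ?k"
    by (simp add: tvar_pow mult_single mu_def)
  ultimately have "Poly_Mapping.single m c - Poly_Mapping.single (mu p q m) c = Poly_Mapping.single ?m0 c * (tvar p ^ ?k - tvar q ^ ?k)"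
    by (simp add: right_diff_distrib)
  also have "\<dots> = (tvar p - tvar q) * Dmon p q m c"
    by (simp add: power_diff_sumr2 Dmon_def)
  finally show ?thesis .
qed

definition Dv :: "nat \<Rightarrow> nat \<Rightarrow> cpoly \<Rightarrow> cpoly" where
  "Dv p q A = (\<Sum>m\<in>Poly_Mapping.keys A. Dmon p q m (Poly_Mapping.lookup A m))"

lemma Dv_eq: "p \<noteq> q \<Longrightarrow> A - subst p q A = (tvar p - tvar q) * Dv p q A"
proof -
  assume pq: "p \<noteq> q"
  have "A - subst p q A = (\<Sum>m\<in>Poly_Mapping.keys A. Poly_Mapping.single m (Poly_Mapping.lookup A m) - Poly_Mapping.single (mu p q m) (Poly_Mapping.lookup A m))"
    by (subst (1) poly_expand) (simp add: subst_def sum_subtractf)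
  also have "\<dots> = (tvar p - tvar q) * Dv p q A"
    by (simp add: Dmon_eq[OF pq] Dv_def sum_distrib_left)
  finally show ?thesis .
qed

lemma Dv_zero: "p \<noteq> q \<Longrightarrow> subst p q A = 0 \<Longrightarrow> A = (tvar p - tvar q) * Dv p q A"
  using Dv_eq[of p q A] by simp

lemma Pol_0[simp]: "0 \<in> Pol n" by (simp add: Pol_def)
lemma Pol_1[simp]: "1 \<in> Pol n" by (simp add: Pol_def)
lemma Pol_add: "A \<in> Pol n \<Longrightarrow> B \<in> Pol n \<Longrightarrow> A + B \<in> Pol n"
  using keys_add[of A B] by (auto simp: Pol_def)
lemma Pol_uminus: "A \<in> Pol n \<Longrightarrow> - A \<in> Pol n"
  by (auto simp: Pol_def)
lemma Pol_diff: "A \<in> Pol n \<Longrightarrow> B \<in> Pol n \<Longrightarrow> A - B \<in> Pol n"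
  using Pol_add[of A n "-B"] Pol_uminus[of B n] by simp
lemma Pol_mult: "A \<in> Pol n \<Longrightarrow> B \<in> Pol n \<Longrightarrow> A * B \<in> Pol n"
  unfolding Pol_def
proof safe
  fix m x assume A: "\<forall>m\<in>Poly_Mapping.keys A. Poly_Mapping.keys m \<subseteq> {1..n}"
    and B: "\<forall>m\<in>Poly_Mapping.keys B. Poly_Mapping.keys m \<subseteq> {1..n}"
    and m: "m \<in> Poly_Mapping.keys (A * B)" and x: "x \<in> Poly_Mapping.keys m"
  from m keys_mult obtain a b where "m = a + b" "a \<in> Poly_Mapping.keys A" "b \<in> Poly_Mapping.keys B" by blast
  with x keys_add[of a b] A B show "x \<in> {1..n}" by blast
qed
lemma Pol_sum: "(\<And>x. x \<in> S \<Longrightarrow> F x \<in> Pol n) \<Longrightarrow> sum F S \<in> Pol n"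
  by (induction S rule: infinite_finite_induct) (auto intro: Pol_add)
lemma Pol_pow: "A \<in> Pol n \<Longrightarrow> A ^ k \<in> Pol n"
  by (induction k) (auto intro: Pol_mult)
lemma Pol_tvar: "j \<in> {1..n} \<Longrightarrow> tvar j \<in> Pol n"
  by (simp add: Pol_def tvar_def)
lemma Pol_single: "Poly_Mapping.keys m \<subseteq> {1..n} \<Longrightarrow> Poly_Mapping.single m c \<in> Pol n"
  by (simp add: Pol_def)

lemma Pol_Dv: "A \<in> Pol n \<Longrightarrow> p \<in> {1..n} \<Longrightarrow> q \<in> {1..n} \<Longrightarrow> Dv p q A \<in> Pol n"
  unfolding Dv_def Dmon_def
  by (intro Pol_sum Pol_mult Pol_single Pol_pow Pol_tvar) (auto simp: Pol_def keys_update)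



lemma transpose_eq_cases:
  assumes "a \<noteq> b" "transpose a b = transpose c d"
  shows "(c = a \<and> d = b) \<or> (c = b \<and> d = a)"
proof -
  have "transpose c d a = b" using assms by (metis transpose_apply_first)
  moreover have "transpose c d b = a" using assms by (metis transpose_apply_second)
  ultimately show ?thesis using assms(1) by (auto simp: transpose_eq_iff)
qed

lemma transpose_conj:
  assumes "s \<circ> s = id"
  shows "s \<circ> transpose a b \<circ> s = transpose (s a) (s b)"
proof
  fix x
  have ss: "\<And>y. s (s y) = y" using assms by (metis comp_apply id_apply)
  show "(s \<circ> transpose a b \<circ> s) x = transpose (s a) (s b) x"
  proof -
    have e1: "x = s a \<longleftrightarrow> s x = a" and e2: "x = s b \<longleftrightarrow> s x = b" by (metis ss)+
    show ?thesis by (simp add: transpose_def e1 e2 ss)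
  qed
qed

lemma Sym_comp:
  assumes "v \<in> Sym n" "a \<in> {1..n}" "b \<in> {1..n}"
  shows "v \<circ> transpose a b \<in> Sym n"
  using assms unfolding Sym_def by (simp add: permutes_compose permutes_swap_id del: atLeastAtMost_iff)

lemma notSym_comp:
  assumes "v \<notin> Sym n" "a \<in> {1..n}" "b \<in> {1..n}"
  shows "v \<circ> transpose a b \<notin> Sym n"
proof
  assume "v \<circ> transpose a b \<in> Sym n"
  from Sym_comp[OF this assms(2,3)] have "v \<circ> (transpose a b \<circ> transpose a b) \<in> Sym n"
    by (simp add: comp_assoc)
  with assms(1) show False by simp
qed

lemma HH_off: "g \<in> HH n \<Longrightarrow> v \<notin> Sym n \<Longrightarrow> g v = 0"
  by (simp add: HH_def)
lemma HH_on: "g \<in> HH n \<Longrightarrow> v \<in> Sym n \<Longrightarrow> g v \<in> Pol n"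
  by (simp add: HH_def)

lemma Sym_inj: "v \<in> Sym n \<Longrightarrow> v x = v y \<longleftrightarrow> x = y"
  by (auto simp: Sym_def dest: permutes_inj injD)

lemma Sym_in: "v \<in> Sym n \<Longrightarrow> x \<in> {1..n} \<Longrightarrow> v x \<in> {1..n}"
  unfolding Sym_def by (simp add: permutes_in_image del: atLeastAtMost_iff)

lemma xx_Sym: "v \<in> Sym n \<Longrightarrow> xx n i v = tvar (v i)"
  by (simp add: xx_def)

lemma Transp_in: "transpose a b \<in> Transpositions n \<Longrightarrow> a \<noteq> b \<Longrightarrow> a \<in> {1..n} \<and> b \<in> {1..n}"
proof -
  assume "transpose a b \<in> Transpositions n" "a \<noteq> b"
  then obtain a' b' where "transpose a b = transpose a' b'" "a' \<in> {1..n}" "b' \<in> {1..n}"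
    unfolding Transpositions_def by blast
  with transpose_eq_cases[OF \<open>a \<noteq> b\<close> this(1)] show ?thesis by auto
qed



lemma star_tr: "star f (transpose a b) v = f (v \<circ> transpose a b)"
  by (simp add: star_def)

theorem corollary1:
  fixes n i :: nat and C :: "(nat \<Rightarrow> nat) set"
  assumes "n \<ge> 1" and "1 \<le> i" and "i < n"
    and "C \<subseteq> Transpositions n"
    and "stranspo i \<in> C"
  defines "D \<equiv> C \<inter> (\<lambda>\<tau>. stranspo i \<circ> \<tau> \<circ> stranspo i) ` C"
  shows "HC n C \<subseteq> HC n {stranspo i} \<and> (\<forall>f \<in> HC n C. ddiff n i f \<in> HC n D)"
proof -
  let ?s = "stranspo i"
  have sdef: "?s = transpose i (Suc i)" by (simp add: stranspo_def)
  have iS: "i \<in> {1..n}" "Suc i \<in> {1..n}" using assms by auto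
  have ss: "?s \<circ> ?s = id" by (simp add: stranspo_def)
  have sss: "\<And>u. u \<circ> ?s \<circ> ?s = u" by (simp add: stranspo_def comp_assoc)
  have part1: "HC n C \<subseteq> HC n {?s}" using assms(5) by (auto simp: HC_def)
  moreover have "\<forall>f \<in> HC n C. ddiff n i f \<in> HC n D"
  proof
    fix f assume fC: "f \<in> HC n C"
    have fH: "f \<in> HH n" and fsat: "\<And>\<tau>. \<tau> \<in> C \<Longrightarrow> sat_cond n \<tau> f" using fC by (auto simp: HC_def)
    obtain g where gH: "g \<in> HH n" and geq: "\<And>v. f v - f (v \<circ> ?s) = (xx n i v - xx n (Suc i) v) * g v"
    proof -
      from fsat[OF assms(5)] obtain i' k' g0 where ik: "i' \<noteq> k'" "?s = transpose i' k'" and g0H: "g0 \<in> HH n"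
        and e: "\<forall>v. f v - star f ?s v = (xx n i' v - xx n k' v) * g0 v" unfolding sat_cond_def by blast
      from transpose_eq_cases[of i "Suc i" i' k'] ik(2) have "(i' = i \<and> k' = Suc i) \<or> (i' = Suc i \<and> k' = i)"
        by (simp add: stranspo_def)
      then show ?thesis
      proof
        assume "i' = i \<and> k' = Suc i" then show ?thesis using that[of g0] e g0H by (simp add: star_def stranspo_def)
      next
        assume "i' = Suc i \<and> k' = i"
        moreover have "(\<lambda>v. - g0 v) \<in> HH n" using g0H by (auto simp: HH_def Pol_uminus)
        ultimately show ?thesis using that[of "\<lambda>v. - g0 v"] e by (simp add: star_def stranspo_def algebra_simps)
      qed
    qed
    have Pnz: "\<And>v. v \<in> Sym n \<Longrightarrow> xx n i v - xx n (Suc i) v \<noteq> 0"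
      by (simp add: xx_Sym tvar_eq_iff Sym_inj)
    have dd: "ddiff n i f = g"
      unfolding ddiff_def
    proof (rule the_equality)
      show "g \<in> HH n \<and> (\<forall>v. f v - star f ?s v = (xx n i v - xx n (Suc i) v) * g v)"
        using gH geq by (simp add: star_tr sdef)
    next
      fix g2 assume g2: "g2 \<in> HH n \<and> (\<forall>v. f v - star f ?s v = (xx n i v - xx n (Suc i) v) * g2 v)"
      show "g2 = g"
      proof
        fix v show "g2 v = g v"
        proof (cases "v \<in> Sym n")
          case True
          then have "(xx n i v - xx n (Suc i) v) * g2 v = (xx n i v - xx n (Suc i) v) * g v"
            using geq[of v] g2 by (simp add: star_tr sdef)
          then show ?thesis using Pnz[OF True] by simp
        next
          case False then show ?thesis using HH_off g2 gH by metis
        qed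
      qed
    qed
    have "g \<in> HC n D"
      unfolding HC_def
    proof (intro CollectI conjI ballI gH)
      fix \<tau> assume "\<tau> \<in> D"
      then obtain \<tau>0 where \<tau>C: "\<tau> \<in> C" and \<tau>0C: "\<tau>0 \<in> C" and \<tau>eq: "\<tau> = ?s \<circ> \<tau>0 \<circ> ?s"
        unfolding D_def by blast
      have "?s \<circ> \<tau> \<circ> ?s = \<tau>0" unfolding \<tau>eq by (simp add: fun_eq_iff stranspo_def)
      with \<tau>0C have \<tau>'C: "?s \<circ> \<tau> \<circ> ?s \<in> C" by simp
      from fsat[OF \<tau>C] obtain a b h1 where ab: "a \<noteq> b" "\<tau> = transpose a b" and h1H: "h1 \<in> HH n"
        and e1: "\<forall>v. f v - star f \<tau> v = (xx n a v - xx n b v) * h1 v" unfolding sat_cond_def by blast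
      have abn: "a \<in> {1..n}" "b \<in> {1..n}" using Transp_in[of a b n] ab assms(4) \<tau>C by auto
      from fsat[OF \<tau>'C] obtain c d h2 where cd0: "c \<noteq> d" "?s \<circ> \<tau> \<circ> ?s = transpose c d" and h2H: "h2 \<in> HH n"
        and e2: "\<forall>v. f v - star f (?s \<circ> \<tau> \<circ> ?s) v = (xx n c v - xx n d v) * h2 v" unfolding sat_cond_def by blast
      have sab: "?s a \<noteq> ?s b" using ab(1) transpose_eq_imp_eq by (metis stranspo_def)
      have cd: "(c = ?s a \<and> d = ?s b) \<or> (c = ?s b \<and> d = ?s a)"
        using transpose_eq_cases[OF sab, of c d] cd0(2) transpose_conj[OF ss, of a b] ab(2) by simp
      show "sat_cond n \<tau> g"
      proof (cases "\<tau> = ?s")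
        case True
        show ?thesis unfolding sat_cond_def
        proof (intro exI conjI bexI allI)
          show "a \<noteq> b" "\<tau> = transpose a b" by (fact ab)+
          show "(\<lambda>_. 0) \<in> HH n" by (simp add: HH_def)
          fix v show "g v - star g \<tau> v = (xx n a v - xx n b v) * 0"
          proof (cases "v \<in> Sym n")
            case vS: True
            have vsS: "v \<circ> ?s \<in> Sym n" using Sym_comp[OF vS iS] sdef by simp
            define u where "u = v \<circ> ?s"
            have uS: "u \<in> Sym n" using vsS u_def by simp
            have A: "f u - f v = (xx n i u - xx n (Suc i) u) * g u"
              using geq[of u] sss[of v] unfolding u_def by simp
            have xu: "xx n i u - xx n (Suc i) u = - (xx n i v - xx n (Suc i) v)"
              using vS uS by (simp add: xx_Sym sdef u_def)
            have B: "f v - f u = (xx n i v - xx n (Suc i) v) * g v" using geq[of v] u_def by simp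
            have "(xx n i v - xx n (Suc i) v) * g v = (xx n i v - xx n (Suc i) v) * g u"
              using A B xu by (metis minus_diff_eq mult_minus_left)
            then have "g v = g u" using Pnz[OF vS] by simp
            then have "g v = g (v \<circ> ?s)" using u_def by simp
            then show ?thesis using True by (simp add: star_def sdef)
          next
            case False
            have "v \<circ> ?s \<notin> Sym n" using notSym_comp[OF False iS] sdef by simp
            then show ?thesis using False HH_off[OF gH] True by (simp add: star_def sdef)
          qed
        qed
      next
        case False
        define h where "h v = (if v \<in> Sym n then Dv (v a) (v b) (g v - g (v \<circ> \<tau>)) else 0)" for v
        show ?thesis unfolding sat_cond_def
        proof (intro exI conjI bexI allI)
          show "a \<noteq> b" "\<tau> = transpose a b" by (fact ab)+
          show "h \<in> HH n" unfolding HH_def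
          proof (intro CollectI conjI ballI allI impI)
            fix v assume vS: "v \<in> Sym n"
            have "v \<circ> \<tau> \<in> Sym n" using Sym_comp[OF vS abn] ab(2) by simp
            then show "h v \<in> Pol n" using vS
              unfolding h_def using Pol_Dv[OF Pol_diff[OF HH_on[OF gH vS] HH_on[OF gH]] Sym_in[OF vS abn(1)] Sym_in[OF vS abn(2)]] by simp
          next
            fix v assume "v \<notin> Sym n" then show "h v = 0" by (simp add: h_def)
          qed
          fix v show "g v - star g \<tau> v = (xx n a v - xx n b v) * h v"
          proof (cases "v \<in> Sym n")
            case vS: True
            define p where "p = v a"
            define q where "q = v b"
            define w where "w = v \<circ> \<tau>"
            have pq: "p \<noteq> q" using ab(1) vS by (simp add: p_def q_def Sym_inj)
            have wS: "w \<in> Sym n" using Sym_comp[OF vS abn] ab(2) w_def by simp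
            have vsS: "v \<circ> ?s \<in> Sym n" using Sym_comp[OF vS iS] sdef by simp
            have wsS: "w \<circ> ?s \<in> Sym n" using Sym_comp[OF wS iS] sdef by simp
            let ?\<sigma> = "subst p q"
            have sp: "?\<sigma> (tvar p) = ?\<sigma> (tvar q)" using pq by (simp add: subst_tvar)
            have st: "?\<sigma> (tvar (w j)) = ?\<sigma> (tvar (v j))" for j
              using pq vS by (auto simp: subst_tvar w_def ab(2) p_def q_def Sym_inj transpose_def)
            have E1: "f v - f w = (tvar p - tvar q) * h1 v"
              using e1 vS ab(2) by (simp add: star_tr w_def xx_Sym p_def q_def)
            have S1: "?\<sigma> (f v) = ?\<sigma> (f w)"
              using arg_cong[OF E1, of ?\<sigma>] pq by (simp add: subst_diff subst_mult sp)
            have ws: "v \<circ> ?s \<circ> (?s \<circ> \<tau> \<circ> ?s) = w \<circ> ?s"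
              by (simp add: w_def fun_eq_iff stranspo_def)
            have E2: "f (v \<circ> ?s) - f (w \<circ> ?s) = (xx n c (v \<circ> ?s) - xx n d (v \<circ> ?s)) * h2 (v \<circ> ?s)"
              using e2 cd0(2) ws by (metis star_tr)
            have "?\<sigma> (xx n c (v \<circ> ?s) - xx n d (v \<circ> ?s)) = 0"
              using cd vsS sp by (auto simp: xx_Sym subst_diff p_def q_def stranspo_def)
            then have S2: "?\<sigma> (f (v \<circ> ?s)) = ?\<sigma> (f (w \<circ> ?s))"
              using arg_cong[OF E2, of ?\<sigma>] pq by (simp add: subst_diff subst_mult)
            have G1: "?\<sigma> (f v) - ?\<sigma> (f (v \<circ> ?s)) = (?\<sigma> (tvar (v i)) - ?\<sigma> (tvar (v (Suc i)))) * ?\<sigma> (g v)"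
              using arg_cong[OF geq[of v], of ?\<sigma>] pq vS by (simp add: subst_diff subst_mult xx_Sym)
            have G2: "?\<sigma> (f w) - ?\<sigma> (f (w \<circ> ?s)) = (?\<sigma> (tvar (v i)) - ?\<sigma> (tvar (v (Suc i)))) * ?\<sigma> (g w)"
              using arg_cong[OF geq[of w], of ?\<sigma>] pq wS by (simp add: subst_diff subst_mult xx_Sym st)
            have nz: "?\<sigma> (tvar (v i)) - ?\<sigma> (tvar (v (Suc i))) \<noteq> 0"
            proof -
              have n1: "\<not> (a = i \<and> b = Suc i)" using False ab(2) sdef by auto
              have n2: "\<not> (a = Suc i \<and> b = i)" using False ab(2) sdef transpose_commute by metis
              have "(if v i = p then q else v i) \<noteq> (if v (Suc i) = p then q else v (Suc i))"
                using vS n1 n2 ab(1) by (auto simp: p_def q_def Sym_inj)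
              then show ?thesis using pq by (simp only: subst_tvar[OF pq] right_minus_eq tvar_eq_iff simp_thms)
            qed
            have "?\<sigma> (g v) = ?\<sigma> (g w)" using G1 G2 S1 S2 nz by simp
            then have "?\<sigma> (g v - g w) = 0" by (simp add: subst_diff)
            from Dv_zero[OF pq this] show ?thesis
              using vS ab(2) by (simp add: star_tr h_def xx_Sym p_def q_def w_def)
          next
            case False
            have "v \<circ> \<tau> \<notin> Sym n" using notSym_comp[OF False abn] ab(2) by simp
            then show ?thesis using False HH_off[OF gH] ab(2) by (simp add: star_tr h_def xx_def)
          qed
        qed
      qed
    qed
    then show "ddiff n i f \<in> HC n D" using dd by simp
  qed
  ultimately show ?thesis by blast
qed


end
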